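(* Let $F$ be a Banach lattice and $\tau$ a linear topology on $F$ weaker than the norm topology, with the Kadec-Pelczynski property. Then (i) $\tau$ agrees with the norm topology on every dispersed closed subspace of $F$; (ii) every DNS operator $T:F\to H$ into a Banach space complements $\tau$.
   Context: $\mathrm{S}_F$ is the unit sphere. A sequence $(e_n)\subset\mathrm{S}_F$ is almost disjoint if there is a disjoint $(f_n)\subset F$ ($|f_n|\wedge|f_m|=0$, $n\ne m$) with $\|e_n-f_n\|\to0$; a closed subspace is dispersed if it contains no almost disjoint sequence. $\tau$ has the Kadec-Pelczynski property if whenever $(f_p)_{p\in P}\subset\mathrm{S}_F$ is a $\tau$-null net and $(q_n)_{n\in\mathbb{N}}\subset P$, there are $p_n\ge q_n$ in $P$ with $(f_{p_n})_n$ almost disjoint. $T$ is DNS if no disjoint $(f_n)\subset\mathrm{S}_F$ has $\|Tf_n\|\to0$. $T$ complements $\tau$ if there is no net in $\mathrm{S}_F$ which is $\tau$-null and along which $\|Tf_p\|\to0$. *)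

theory Defs
  imports "HOL-Analysis.Analysis"
begin

definition lmod :: "'a::{lattice, ab_group_add} \<Rightarrow> 'a" where
  "lmod x = sup x (- x)"

definition disjoint_seq :: "(nat \<Rightarrow> 'a::{lattice, ab_group_add}) \<Rightarrow> bool" where
  "disjoint_seq f \<longleftrightarrow> (\<forall>n m. n \<noteq> m \<longrightarrow> inf (lmod (f n)) (lmod (f m)) = 0)"

definition almost_disjoint :: "(nat \<Rightarrow> 'a::{lattice, real_normed_vector}) \<Rightarrow> bool" where
  "almost_disjoint e \<longleftrightarrow> (\<forall>n. e n \<in> sphere 0 1) \<and>
     (\<exists>f. disjoint_seq f \<and> (\<lambda>n. norm (e n - f n)) \<longlonglongrightarrow> 0)"

definition dispersed :: "'a::{lattice, real_normed_vector} set \<Rightarrow> bool" where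
  "dispersed E \<longleftrightarrow> \<not> (\<exists>e. (\<forall>n. e n \<in> E) \<and> almost_disjoint e)"

definition linear_topology :: "'a::real_vector topology \<Rightarrow> bool" where
  "linear_topology \<tau> \<longleftrightarrow> topspace \<tau> = UNIV \<and>
     continuous_map (prod_topology \<tau> \<tau>) \<tau> (\<lambda>(x, y). x + y) \<and>
     continuous_map (prod_topology euclideanreal \<tau>) \<tau> (\<lambda>(c, x). c *\<^sub>R x)"

definition directed_on :: "'p set \<Rightarrow> ('p \<Rightarrow> 'p \<Rightarrow> bool) \<Rightarrow> bool" where
  "directed_on P le \<longleftrightarrow> P \<noteq> {} \<and> (\<forall>p\<in>P. le p p) \<and>
     (\<forall>p\<in>P. \<forall>q\<in>P. \<forall>r\<in>P. le p q \<and> le q r \<longrightarrow> le p r) \<and>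
     (\<forall>p\<in>P. \<forall>q\<in>P. \<exists>r\<in>P. le p r \<and> le q r)"

definition net_tendsto :: "'a topology \<Rightarrow> 'p set \<Rightarrow> ('p \<Rightarrow> 'p \<Rightarrow> bool) \<Rightarrow> ('p \<Rightarrow> 'a) \<Rightarrow> 'a \<Rightarrow> bool" where
  "net_tendsto \<tau> P le f x \<longleftrightarrow>
     (\<forall>U. openin \<tau> U \<and> x \<in> U \<longrightarrow> (\<exists>p0\<in>P. \<forall>p\<in>P. le p0 p \<longrightarrow> f p \<in> U))"

text \<open>Kadec-Pelczynski property, for nets whose directed set lives in the type 'p.\<close>
definition KP_property :: "'p itself \<Rightarrow> 'a::{lattice, real_normed_vector} topology \<Rightarrow> bool" where
  "KP_property _ \<tau> \<longleftrightarrow>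
     (\<forall>(P::'p set) le f. directed_on P le \<and> (\<forall>p\<in>P. f p \<in> sphere 0 1) \<and> net_tendsto \<tau> P le f 0 \<longrightarrow>
        (\<forall>q. (\<forall>n. q n \<in> P) \<longrightarrow>
           (\<exists>pn. (\<forall>n. pn n \<in> P \<and> le (q n) (pn n)) \<and> almost_disjoint (f \<circ> pn))))"

definition DNS :: "('a::{lattice, real_normed_vector} \<Rightarrow> 'b::real_normed_vector) \<Rightarrow> bool" where
  "DNS T \<longleftrightarrow> \<not> (\<exists>f. disjoint_seq f \<and> (\<forall>n. f n \<in> sphere 0 1) \<and> (\<lambda>n. norm (T (f n))) \<longlonglongrightarrow> 0)"

definition complements :: "'p itself \<Rightarrow> ('a::real_normed_vector \<Rightarrow> 'b::real_normed_vector) \<Rightarrow> 'a topology \<Rightarrow> bool" where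
  "complements _ T \<tau> \<longleftrightarrow>
     \<not> (\<exists>(P::'p set) le f. directed_on P le \<and> (\<forall>p\<in>P. f p \<in> sphere 0 1) \<and> net_tendsto \<tau> P le f 0 \<and>
          (\<forall>\<epsilon>>0. \<exists>p0\<in>P. \<forall>p\<in>P. le p0 p \<longrightarrow> norm (T (f p)) < \<epsilon>))"

end

theory Submission
  imports Defs
begin

lemma scale_inf:
  fixes a b :: "'a::{lattice, ordered_real_vector}"
  assumes c: "c > 0"
  shows "inf (c *\<^sub>R a) (c *\<^sub>R b) = c *\<^sub>R inf a b"
proof (rule antisym)
  show "c *\<^sub>R inf a b \<le> inf (c *\<^sub>R a) (c *\<^sub>R b)"
    using c by (simp add: scaleR_left_mono)
  have "inverse c *\<^sub>R inf (c *\<^sub>R a) (c *\<^sub>R b) \<le> inverse c *\<^sub>R (c *\<^sub>R a)"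
    using c by (intro scaleR_left_mono) auto
  moreover have "inverse c *\<^sub>R inf (c *\<^sub>R a) (c *\<^sub>R b) \<le> inverse c *\<^sub>R (c *\<^sub>R b)"
    using c by (intro scaleR_left_mono) auto
  ultimately have "inverse c *\<^sub>R inf (c *\<^sub>R a) (c *\<^sub>R b) \<le> inf a b"
    using c by simp
  then have "c *\<^sub>R (inverse c *\<^sub>R inf (c *\<^sub>R a) (c *\<^sub>R b)) \<le> c *\<^sub>R inf a b"
    using c by (intro scaleR_left_mono) auto
  then show "inf (c *\<^sub>R a) (c *\<^sub>R b) \<le> c *\<^sub>R inf a b" using c by simp
qed

lemma scale_sup:
  fixes a b :: "'a::{lattice, ordered_real_vector}"
  assumes c: "c > 0"
  shows "sup (c *\<^sub>R a) (c *\<^sub>R b) = c *\<^sub>R sup a b"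
proof (rule antisym)
  show "sup (c *\<^sub>R a) (c *\<^sub>R b) \<le> c *\<^sub>R sup a b"
    using c by (simp add: scaleR_left_mono)
  have "inverse c *\<^sub>R (c *\<^sub>R a) \<le> inverse c *\<^sub>R sup (c *\<^sub>R a) (c *\<^sub>R b)"
    using c by (intro scaleR_left_mono) auto
  moreover have "inverse c *\<^sub>R (c *\<^sub>R b) \<le> inverse c *\<^sub>R sup (c *\<^sub>R a) (c *\<^sub>R b)"
    using c by (intro scaleR_left_mono) auto
  ultimately have "sup a b \<le> inverse c *\<^sub>R sup (c *\<^sub>R a) (c *\<^sub>R b)"
    using c by simp
  then have "c *\<^sub>R sup a b \<le> c *\<^sub>R (inverse c *\<^sub>R sup (c *\<^sub>R a) (c *\<^sub>R b))"
    using c by (intro scaleR_left_mono) auto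
  then show "c *\<^sub>R sup a b \<le> sup (c *\<^sub>R a) (c *\<^sub>R b)" using c by simp
qed

lemma lmod_scale:
  fixes a :: "'a::{lattice, ordered_real_vector}"
  assumes c: "c > 0"
  shows "lmod (c *\<^sub>R a) = c *\<^sub>R lmod a"
  unfolding lmod_def using scale_sup[OF c, of a "-a"] by simp

lemma lmod_nonneg:
  fixes x :: "'a::{lattice, ordered_real_vector}"
  shows "0 \<le> lmod x"
proof -
  have "x + - x \<le> lmod x + lmod x" unfolding lmod_def
    by (intro add_mono) auto
  then have "(1/2::real) *\<^sub>R 0 \<le> (1/2::real) *\<^sub>R (lmod x + lmod x)"
    by (intro scaleR_left_mono) auto
  then show ?thesis by (simp add: scaleR_add_right[symmetric] del: scaleR_add_right)
qed

lemma disj_scale: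
  fixes a b :: "'a::{lattice, ordered_real_vector}"
  assumes "inf (lmod a) (lmod b) = 0" "c > 0" "d > 0"
  shows "inf (lmod (c *\<^sub>R a)) (lmod (d *\<^sub>R b)) = 0"
proof -
  define M where "M = max c d"
  have M: "M > 0" "c \<le> M" "d \<le> M" using assms by (auto simp: M_def)
  have "inf (lmod (c *\<^sub>R a)) (lmod (d *\<^sub>R b)) = inf (c *\<^sub>R lmod a) (d *\<^sub>R lmod b)"
    using assms by (simp add: lmod_scale)
  also have "\<dots> \<le> inf (M *\<^sub>R lmod a) (M *\<^sub>R lmod b)"
    using M lmod_nonneg by (intro inf_mono scaleR_right_mono) auto
  also have "\<dots> = 0" using scale_inf[OF M(1), of "lmod a" "lmod b"] assms(1) by simp
  finally have "inf (lmod (c *\<^sub>R a)) (lmod (d *\<^sub>R b)) \<le> 0" .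
  moreover have "0 \<le> inf (lmod (c *\<^sub>R a)) (lmod (d *\<^sub>R b))"
    using lmod_nonneg by (metis le_infI)
  ultimately show ?thesis by (rule antisym)
qed

lemma part2:
  fixes \<tau> :: "'a::{banach, lattice, ordered_real_vector} topology" and T :: "'a \<Rightarrow> 'b::banach"
  assumes KP: "KP_property TYPE('p) \<tau>" and bl: "bounded_linear T" and dns: "DNS T"
  shows "complements TYPE('p) T \<tau>"
proof (rule ccontr)
  assume "\<not> complements TYPE('p) T \<tau>"
  then obtain P :: "'p set" and le f where dir: "directed_on P le"
    and sph: "\<forall>p\<in>P. f p \<in> sphere 0 1" and nt: "net_tendsto \<tau> P le f 0"
    and small: "\<forall>\<epsilon>>0. \<exists>p0\<in>P. \<forall>p\<in>P. le p0 p \<longrightarrow> norm (T (f p)) < \<epsilon>"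
    unfolding complements_def by blast
  define q where "q n = (SOME p0. p0 \<in> P \<and> (\<forall>p\<in>P. le p0 p \<longrightarrow> norm (T (f p)) < 1 / real (Suc n)))" for n
  have q: "q n \<in> P \<and> (\<forall>p\<in>P. le (q n) p \<longrightarrow> norm (T (f p)) < 1 / real (Suc n))" for n
  proof -
    have "\<exists>p0. p0 \<in> P \<and> (\<forall>p\<in>P. le p0 p \<longrightarrow> norm (T (f p)) < 1 / real (Suc n))"
      using small[rule_format, of "1 / real (Suc n)"] by auto
    then show ?thesis unfolding q_def by (rule someI_ex)
  qed
  obtain pn where pn: "\<forall>n. pn n \<in> P \<and> le (q n) (pn n)" and ad: "almost_disjoint (f \<circ> pn)"
    using KP[unfolded KP_property_def, rule_format, of P le f q] dir sph nt q by blast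
  define e where "e n = f (pn n)" for n
  have ne: "norm (e n) = 1" for n using sph pn by (auto simp: e_def)
  have Tle: "norm (T (e n)) \<le> 1 / real (Suc n)" for n
    using q pn by (auto simp: e_def intro: less_imp_le)
  have lim1: "(\<lambda>n. 1 / real (Suc n)) \<longlonglongrightarrow> 0"
    using LIMSEQ_Suc[OF lim_const_over_n[of 1]] by simp
  have Te: "(\<lambda>n. norm (T (e n))) \<longlonglongrightarrow> 0"
    by (rule tendsto_sandwich[of "\<lambda>_. 0" _ _ "\<lambda>n. 1 / real (Suc n)"])
       (use Tle lim1 in auto)
  from ad obtain g where dg: "disjoint_seq g" and eg: "(\<lambda>n. norm (e n - g n)) \<longlonglongrightarrow> 0"
    unfolding almost_disjoint_def e_def by auto
  obtain K where K: "K > 0" "\<And>x. norm (T x) \<le> norm x * K"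
    using bounded_linear.pos_bounded[OF bl] by blast
  have Tgle: "norm (T (g n)) \<le> norm (T (e n)) + K * norm (e n - g n)" for n
  proof -
    have "T (g n) = T (e n) - T (e n - g n)" using linear_diff[OF bounded_linear.linear[OF bl]] by simp
    then have "norm (T (g n)) \<le> norm (T (e n)) + norm (T (e n - g n))"
      by (metis norm_triangle_ineq4)
    then show ?thesis using K(2)[of "e n - g n"] by (simp add: mult.commute)
  qed
  have Tg: "(\<lambda>n. norm (T (g n))) \<longlonglongrightarrow> 0"
  proof (rule tendsto_sandwich[of "\<lambda>_. 0" _ _ "\<lambda>n. norm (T (e n)) + K * norm (e n - g n)"])
    show "(\<lambda>n. norm (T (e n)) + K * norm (e n - g n)) \<longlonglongrightarrow> 0"
      using tendsto_add[OF Te tendsto_mult_right_zero[OF eg, of K]] by simp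
  qed (use Tgle in auto)
  have ng: "(\<lambda>n. norm (g n)) \<longlonglongrightarrow> 1"
  proof -
    have "(\<lambda>n. norm (g n) - 1) \<longlonglongrightarrow> 0"
    proof (rule Lim_null_comparison[OF _ eg])
      show "\<forall>\<^sub>F n in sequentially. norm (norm (g n) - 1) \<le> norm (e n - g n)"
        using ne norm_triangle_ineq3[of "g _" "e _"] by (auto simp: norm_minus_commute)
    qed
    then show ?thesis by (rule LIM_zero_cancel)
  qed
  obtain N where N: "\<And>n. n \<ge> N \<Longrightarrow> norm (g n) > 1/2"
    using order_tendstoD(1)[OF ng, of "1/2"] by (auto simp: eventually_sequentially)
  define h where "h n = (1 / norm (g (n + N))) *\<^sub>R g (n + N)" for n
  have gpos: "norm (g (n + N)) > 0" for n
  proof -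
    have "1/2 < norm (g (n + N))" using N[of "n+N"] by simp
    then show ?thesis by linarith
  qed
  have hs: "h n \<in> sphere 0 1" for n using gpos[of n] by (simp add: h_def)
  have hd: "disjoint_seq h" unfolding disjoint_seq_def h_def
  proof (intro allI impI)
    fix n m :: nat assume "n \<noteq> m"
    then have "inf (lmod (g (n+N))) (lmod (g (m+N))) = 0" using dg unfolding disjoint_seq_def by auto
    then show "inf (lmod ((1 / norm (g (n + N))) *\<^sub>R g (n + N))) (lmod ((1 / norm (g (m + N))) *\<^sub>R g (m + N))) = 0"
      using gpos by (intro disj_scale) auto
  qed
  have Th: "(\<lambda>n. norm (T (h n))) \<longlonglongrightarrow> 0"
  proof (rule tendsto_sandwich[of "\<lambda>_. 0" _ _ "\<lambda>n. 2 * norm (T (g (n + N)))"])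
    show "(\<lambda>n. 2 * norm (T (g (n + N)))) \<longlonglongrightarrow> 0"
      using tendsto_mult_right_zero[OF LIMSEQ_ignore_initial_segment[OF Tg, of N], of 2] by simp
    have "norm (T (h n)) \<le> 2 * norm (T (g (n + N)))" for n
    proof -
      have "norm (T (h n)) = norm (T (g (n + N))) / norm (g (n + N))"
        using gpos[of n] by (simp add: h_def linear_scale[OF bounded_linear.linear[OF bl]])
      also have "\<dots> \<le> norm (T (g (n + N))) / (1/2)"
        using N[of "n+N"] by (intro divide_left_mono) auto
      finally show ?thesis by simp
    qed
    then show "\<forall>\<^sub>F n in sequentially. norm (T (h n)) \<le> 2 * norm (T (g (n + N)))" by auto
  qed auto
  show False using dns hd hs Th unfolding DNS_def by blast
qed

lemma translate_open:
  fixes \<tau> :: "'a::real_normed_vector topology"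
  assumes lin: "linear_topology \<tau>" and V: "openin \<tau> V"
  shows "openin \<tau> {y. y - x \<in> V}"
proof -
  have top: "topspace \<tau> = UNIV" using lin by (simp add: linear_topology_def)
  have add: "continuous_map (prod_topology \<tau> \<tau>) \<tau> (\<lambda>(x, y). x + y)"
    using lin by (simp add: linear_topology_def)
  have "continuous_map \<tau> (prod_topology \<tau> \<tau>) (\<lambda>y. (y, -x))"
    using top by (intro continuous_map_pairedI) auto
  then have "continuous_map \<tau> \<tau> ((\<lambda>(x, y). x + y) \<circ> (\<lambda>y. (y, -x)))"
    using add by (rule continuous_map_compose)
  then have "openin \<tau> {y \<in> topspace \<tau>. ((\<lambda>(x, y). x + y) \<circ> (\<lambda>y. (y, -x))) y \<in> V}"
    using V by (rule openin_continuous_map_preimage)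
  then show ?thesis using top by simp
qed

lemma scale_open:
  fixes \<tau> :: "'a::real_normed_vector topology"
  assumes lin: "linear_topology \<tau>" and V: "openin \<tau> V"
  shows "openin \<tau> {y. N *\<^sub>R y \<in> V}"
proof -
  have top: "topspace \<tau> = UNIV" using lin by (simp add: linear_topology_def)
  have sc: "continuous_map (prod_topology euclideanreal \<tau>) \<tau> (\<lambda>(c, x). c *\<^sub>R x)"
    using lin by (simp add: linear_topology_def)
  have "continuous_map \<tau> (prod_topology euclideanreal \<tau>) (\<lambda>y. (N, y))"
    using top by (intro continuous_map_pairedI) auto
  then have "continuous_map \<tau> \<tau> ((\<lambda>(c, x). c *\<^sub>R x) \<circ> (\<lambda>y. (N, y)))"
    using sc by (rule continuous_map_compose)
  then have "openin \<tau> {y \<in> topspace \<tau>. ((\<lambda>(c, x). c *\<^sub>R x) \<circ> (\<lambda>y. (N, y))) y \<in> V}"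
    using V by (rule openin_continuous_map_preimage)
  then show ?thesis using top by simp
qed

lemma scale_nbhd:
  fixes \<tau> :: "'a::real_normed_vector topology"
  assumes lin: "linear_topology \<tau>" and U: "openin \<tau> U" "0 \<in> U"
  obtains \<delta> W where "\<delta> > 0" "openin \<tau> W" "0 \<in> W" "\<And>c w. \<bar>c\<bar> < \<delta> \<Longrightarrow> w \<in> W \<Longrightarrow> c *\<^sub>R w \<in> U"
proof -
  have top: "topspace \<tau> = UNIV" using lin by (simp add: linear_topology_def)
  have sc: "continuous_map (prod_topology euclideanreal \<tau>) \<tau> (\<lambda>(c, x). c *\<^sub>R x)"
    using lin by (simp add: linear_topology_def)
  have "openin (prod_topology euclideanreal \<tau>) {p \<in> topspace (prod_topology euclideanreal \<tau>). (\<lambda>(c, x). c *\<^sub>R x) p \<in> U}"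
    using sc U(1) by (rule openin_continuous_map_preimage)
  then have op: "openin (prod_topology euclideanreal \<tau>) {(c, x). c *\<^sub>R x \<in> U}"
    using top by (simp add: case_prod_unfold)
  have "(0, 0) \<in> {(c, x). c *\<^sub>R x \<in> U}" using U(2) by simp
  then obtain A W where AW: "openin euclideanreal A" "openin \<tau> W" "0 \<in> A" "0 \<in> W"
      "A \<times> W \<subseteq> {(c, x). c *\<^sub>R x \<in> U}"
    using op[unfolded openin_prod_topology_alt, rule_format, of 0 0] by auto
  have "open A" using AW(1) by simp
  then obtain \<delta> where d: "\<delta> > 0" "ball 0 \<delta> \<subseteq> A" using AW(3) open_contains_ball by blast
  show ?thesis
  proof (rule that[OF d(1) AW(2) AW(4)])
    fix c :: real and w assume "\<bar>c\<bar> < \<delta>" "w \<in> W"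
    then have "(c, w) \<in> A \<times> W" using d(2) by auto
    then show "c *\<^sub>R w \<in> U" using AW(5) by auto
  qed
qed

lemma key_nbhd:
  fixes \<tau> :: "'a::{banach, lattice, ordered_real_vector} topology"
  assumes lin: "linear_topology \<tau>" and KP_sets: "KP_property TYPE('a set) \<tau>"
    and E: "subspace E" "dispersed E" and x: "x \<in> E" and eps: "\<epsilon> > 0"
  shows "\<exists>U. openin \<tau> U \<and> x \<in> U \<and> U \<inter> E \<subseteq> ball x \<epsilon>"
proof (rule ccontr)
  assume "\<not> ?thesis"
  then have H: "\<exists>y. y \<in> U \<and> y \<in> E \<and> \<epsilon> \<le> dist x y" if "openin \<tau> U" "x \<in> U" for U
    using that by (auto simp: subset_iff not_less)
  have top: "topspace \<tau> = UNIV" using lin by (simp add: linear_topology_def)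
  define P where "P = {V. openin \<tau> V \<and> 0 \<in> V}"
  define le :: "'a set \<Rightarrow> 'a set \<Rightarrow> bool" where "le V W \<longleftrightarrow> W \<subseteq> V" for V W
  have UNIVP: "UNIV \<in> P" unfolding P_def using openin_topspace[of \<tau>] top by simp
  have dir: "directed_on P le" unfolding directed_on_def
  proof (intro conjI ballI impI)
    show "P \<noteq> {}" using UNIVP by auto
  next
    fix p q assume "p \<in> P" "q \<in> P"
    then show "\<exists>r\<in>P. le p r \<and> le q r"
      by (intro bexI[of _ "p \<inter> q"]) (auto simp: P_def le_def)
  qed (auto simp: le_def)
  have exz: "\<exists>z. z \<in> V \<and> x + z \<in> E \<and> \<epsilon> \<le> norm z" if "V \<in> P" for V
  proof -
    have "openin \<tau> {y. y - x \<in> V}" using translate_open[OF lin] that by (auto simp: P_def)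
    moreover have "x \<in> {y. y - x \<in> V}" using that by (auto simp: P_def)
    ultimately obtain y where "y - x \<in> V" "y \<in> E" "\<epsilon> \<le> dist x y" using H by blast
    then show ?thesis by (intro exI[of _ "y - x"]) (auto simp: dist_norm norm_minus_commute)
  qed
  define z where "z V = (SOME z. z \<in> V \<and> x + z \<in> E \<and> \<epsilon> \<le> norm z)" for V
  have z: "z V \<in> V \<and> x + z V \<in> E \<and> \<epsilon> \<le> norm (z V)" if "V \<in> P" for V
    unfolding z_def by (rule someI_ex) (rule exz[OF that])
  define f where "f V = (1 / norm (z V)) *\<^sub>R z V" for V
  have zE: "z V \<in> E" if "V \<in> P" for V
  proof -
    have "(x + z V) - x \<in> E" using z[OF that] x E(1) by (intro subspace_diff) auto
    then show ?thesis by simp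
  qed
  have fE: "f V \<in> E" if "V \<in> P" for V
    unfolding f_def using zE[OF that] E(1) by (rule subspace_scale[rotated])
  have zpos: "norm (z V) > 0" if "V \<in> P" for V using z[OF that] eps by linarith
  have fs: "f V \<in> sphere 0 1" if "V \<in> P" for V using zpos[OF that] by (simp add: f_def)
  have nt: "net_tendsto \<tau> P le f 0" unfolding net_tendsto_def
  proof (intro allI impI)
    fix U assume U: "openin \<tau> U \<and> 0 \<in> U"
    obtain \<delta> W where dW: "\<delta> > 0" "openin \<tau> W" "0 \<in> W" "\<And>c w. \<bar>c\<bar> < \<delta> \<Longrightarrow> w \<in> W \<Longrightarrow> c *\<^sub>R w \<in> U"
      using scale_nbhd[OF lin] U by blast
    define N where "N = 2 / (\<epsilon> * \<delta>)"
    have Npos: "N > 0" using eps dW(1) by (simp add: N_def)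
    define V0 where "V0 = {w. N *\<^sub>R w \<in> W}"
    have V0P: "V0 \<in> P" unfolding P_def V0_def using scale_open[OF lin dW(2)] dW(3) by simp
    show "\<exists>p0\<in>P. \<forall>p\<in>P. le p0 p \<longrightarrow> f p \<in> U"
    proof (intro bexI[OF _ V0P] ballI impI)
      fix p assume p: "p \<in> P" "le V0 p"
      have "N *\<^sub>R z p \<in> W" using z[OF p(1)] p(2) by (auto simp: le_def V0_def)
      moreover
      have c: "\<bar>1 / (norm (z p) * N)\<bar> < \<delta>"
      proof -
        have "\<epsilon> * N \<le> norm (z p) * N" using z[OF p(1)] Npos by (intro mult_right_mono) auto
        moreover have "\<epsilon> * N = 2 / \<delta>" using eps by (simp add: N_def)
        ultimately have ge: "2 / \<delta> \<le> norm (z p) * N" by simp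
        have "0 < 2 / \<delta>" using dW(1) by simp
        then have "1 / (norm (z p) * N) \<le> 1 / (2 / \<delta>)" using ge zpos[OF p(1)] Npos by (intro divide_left_mono) auto
        also have "\<dots> = \<delta> / 2" by simp
        finally show ?thesis using dW(1) zpos[OF p(1)] Npos by simp
      qed
      ultimately have "(1 / (norm (z p) * N)) *\<^sub>R (N *\<^sub>R z p) \<in> U" using dW(4) by blast
      then show "f p \<in> U" using Npos by (simp add: f_def)
    qed
  qed
  obtain pn where pn: "\<forall>n. pn n \<in> P \<and> le UNIV (pn n)" and ad: "almost_disjoint (f \<circ> pn)"
    using KP_sets[unfolded KP_property_def, rule_format, of P le f "\<lambda>_. UNIV"] dir fs nt UNIVP by blast
  have "\<forall>n. (f \<circ> pn) n \<in> E" using pn fE by simp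
  then show False using E(2) ad unfolding dispersed_def by blast
qed

lemma part1:
  fixes \<tau> :: "'a::{banach, lattice, ordered_real_vector} topology"
  assumes lin: "linear_topology \<tau>" and weaker: "\<And>U. openin \<tau> U \<Longrightarrow> open U"
    and KP_sets: "KP_property TYPE('a set) \<tau>"
    and E: "subspace E" "dispersed E"
  shows "subtopology \<tau> E = top_of_set E"
  unfolding topology_eq
proof (intro allI iffI)
  fix S assume "openin (subtopology \<tau> E) S"
  then obtain T where "openin \<tau> T" "S = T \<inter> E" by (auto simp: openin_subtopology)
  then show "openin (top_of_set E) S" using weaker by (auto simp: openin_open)
next
  fix S assume S: "openin (top_of_set E) S"
  define T where "T = \<Union>{U. openin \<tau> U \<and> U \<inter> E \<subseteq> S}"
  have "openin \<tau> T" unfolding T_def by (rule openin_Union) auto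
  moreover have "S = T \<inter> E"
  proof
    show "T \<inter> E \<subseteq> S" by (auto simp: T_def)
    show "S \<subseteq> T \<inter> E"
    proof
      fix x assume xS: "x \<in> S"
      have SE: "S \<subseteq> E" using S by (simp add: openin_euclidean_subtopology_iff)
      obtain e where e: "e > 0" "\<And>x'. x' \<in> E \<Longrightarrow> dist x' x < e \<Longrightarrow> x' \<in> S"
        using S xS unfolding openin_euclidean_subtopology_iff by blast
      obtain U where U: "openin \<tau> U" "x \<in> U" "U \<inter> E \<subseteq> ball x e"
        using key_nbhd[OF lin KP_sets E SE[THEN subsetD, OF xS] e(1)] by blast
      have "U \<inter> E \<subseteq> S" using U(3) e(2) by (auto simp: dist_commute)
      then show "x \<in> T \<inter> E" using U xS SE by (auto simp: T_def)
    qed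
  qed
  ultimately show "openin (subtopology \<tau> E) S" by (auto simp: openin_subtopology)
qed

theorem mainTheorem12:
  fixes \<tau> :: "'a::{banach, lattice, ordered_real_vector} topology"
  assumes banach_lattice: "\<And>x y::'a. lmod x \<le> lmod y \<Longrightarrow> norm x \<le> norm y"
    and lin: "linear_topology \<tau>"
    and weaker: "\<And>U. openin \<tau> U \<Longrightarrow> open U"
    and KP_sets: "KP_property TYPE('a set) \<tau>"
    and KP: "KP_property TYPE('p) \<tau>"
  shows "(\<forall>E::'a set. subspace E \<and> closed E \<and> dispersed E \<longrightarrow> subtopology \<tau> E = top_of_set E)
       \<and> (\<forall>T::'a \<Rightarrow> 'b::banach. bounded_linear T \<and> DNS T \<longrightarrow> complements TYPE('p) T \<tau>)"
  using part1[OF lin weaker KP_sets] part2[OF KP] by blast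

end
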